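(* Let $(M,\Sigma)$ be a measurable space, $r\ge1$, and $\mu_1,\dots,\mu_r$ non-atomic countably additive finite measures on $\Sigma$. For $k\ge1$ let $t(k)=k\bmod r$ if this is nonzero and $t(k)=r$ otherwise. Let $(H_k)_{k\ge1}$ be a sequence of measurable sets such that for every $k$: $H_k\subseteq M\setminus\bigcup_{i=1}^{k-1}H_i$, $H_k$ admits a strong solution (a partition $H_k=F_1\sqcup\dots\sqcup F_r$ with $\mu_i(F_i)\ge\mu_i(F_j)$ for all $i,j$), and $\mu_{t(k)}(H_k)\ge 2^{-(r-1)}\mu_{t(k)}\bigl(M\setminus\bigcup_{i=1}^{k-1}H_i\bigr)$. Let $M_\infty=M\setminus\bigcup_{i=1}^\infty H_i$. Then $\mu_j(M_\infty)=0$ for every $j\in\{1,\dots,r\}$. *)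

theory Defs
  imports "HOL-Analysis.Analysis"
begin

definition non_atomic :: "'a measure \<Rightarrow> bool" where
  "non_atomic \<mu> \<longleftrightarrow>
     (\<forall>A\<in>sets \<mu>. emeasure \<mu> A > 0 \<longrightarrow>
        (\<exists>B\<in>sets \<mu>. B \<subseteq> A \<and> 0 < emeasure \<mu> B \<and> emeasure \<mu> B < emeasure \<mu> A))"

definition tidx :: "nat \<Rightarrow> nat \<Rightarrow> nat" where
  "tidx r k = (if k mod r \<noteq> 0 then k mod r else r)"

definition strong_solution ::
  "'a measure \<Rightarrow> (nat \<Rightarrow> 'a measure) \<Rightarrow> nat \<Rightarrow> 'a set \<Rightarrow> (nat \<Rightarrow> 'a set) \<Rightarrow> bool" where
  "strong_solution M \<mu> r H F \<longleftrightarrow>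
     (\<forall>i\<in>{1..r}. F i \<in> sets M) \<and>
     disjoint_family_on F {1..r} \<and>
     (\<Union>i\<in>{1..r}. F i) = H \<and>
     (\<forall>i\<in>{1..r}. \<forall>j\<in>{1..r}. emeasure (\<mu> i) (F i) \<ge> emeasure (\<mu> i) (F j))"

definition admits_strong_solution ::
  "'a measure \<Rightarrow> (nat \<Rightarrow> 'a measure) \<Rightarrow> nat \<Rightarrow> 'a set \<Rightarrow> bool" where
  "admits_strong_solution M \<mu> r H \<longleftrightarrow> (\<exists>F. strong_solution M \<mu> r H F)"

end

theory Submission
  imports Defs
begin

theorem corollary3:
  fixes M :: "'a measure" and \<mu> :: "nat \<Rightarrow> 'a measure" and r :: nat
    and H :: "nat \<Rightarrow> 'a set"
  assumes r: "r \<ge> 1"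
    and sets_eq: "\<And>i. i \<in> {1..r} \<Longrightarrow> sets (\<mu> i) = sets M"
    and fin: "\<And>i. i \<in> {1..r} \<Longrightarrow> finite_measure (\<mu> i)"
    and na: "\<And>i. i \<in> {1..r} \<Longrightarrow> non_atomic (\<mu> i)"
    and H_meas: "\<And>k. k \<ge> 1 \<Longrightarrow> H k \<in> sets M"
    and H_sub: "\<And>k. k \<ge> 1 \<Longrightarrow> H k \<subseteq> space M - (\<Union>i\<in>{1..<k}. H i)"
    and H_strong: "\<And>k. k \<ge> 1 \<Longrightarrow> admits_strong_solution M \<mu> r (H k)"
    and H_big: "\<And>k. k \<ge> 1 \<Longrightarrow>
       emeasure (\<mu> (tidx r k)) (H k)
         \<ge> ennreal ((1/2) ^ (r - 1)) * emeasure (\<mu> (tidx r k)) (space M - (\<Union>i\<in>{1..<k}. H i))"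
  shows "\<forall>j\<in>{1..r}. emeasure (\<mu> j) (space M - (\<Union>i\<in>{1..}. H i)) = 0"
proof
  fix j assume j: "j \<in> {1..r}"
  define N where "N = \<mu> j"
  interpret N: finite_measure N using fin[OF j] by (simp add: N_def)
  have sN: "sets N = sets M" using sets_eq[OF j] by (simp add: N_def)
  have spN: "space N = space M" using sets_eq_imp_space_eq[OF sN] .
  define Minf where "Minf = space M - (\<Union>i\<in>{1..}. H i)"
  have HN: "H k \<in> sets N" if "k \<ge> 1" for k using H_meas[OF that] sN by simp
  have Minf_meas: "Minf \<in> sets N"
    unfolding Minf_def spN[symmetric] using HN by (intro sets.Diff sets.top sets.countable_UN') auto
  have disj: "H a \<inter> H b = {}" if "a \<ge> 1" "b \<ge> 1" "a \<noteq> b" for a b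
  proof (cases "a < b")
    case True then show ?thesis using H_sub[OF that(2)] that by auto
  next
    case False then have "b < a" using that by auto
    then show ?thesis using H_sub[OF that(1)] that by auto
  qed
  define c :: real where "c = (1/2) ^ (r - 1)"
  have c_pos: "c > 0" by (simp add: c_def)
  define a where "a = measure N Minf"
  define b where "b = measure N (space N)"
  have key: "measure N (H (n*r+j)) \<ge> c * a" for n
  proof -
    let ?k = "n*r+j"
    have k1: "?k \<ge> 1" using j by auto
    have t: "tidx r ?k = j"
    proof (cases "j = r")
      case True then show ?thesis unfolding tidx_def by simp
    next
      case False then have "j < r" using j by auto
      then have "?k mod r = j" by simp
      then show ?thesis unfolding tidx_def using j by auto
    qed
    have sub: "Minf \<subseteq> space M - (\<Union>i\<in>{1..<?k}. H i)" unfolding Minf_def by auto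
    have m2: "space M - (\<Union>i\<in>{1..<?k}. H i) \<in> sets N"
      unfolding spN[symmetric] using HN by (intro sets.Diff sets.top sets.finite_UN) auto
    have "ennreal c * emeasure N (space M - (\<Union>i\<in>{1..<?k}. H i)) \<le> emeasure N (H ?k)"
      using H_big[OF k1] t by (simp add: N_def c_def)
    then have "c * measure N (space M - (\<Union>i\<in>{1..<?k}. H i)) \<le> measure N (H ?k)"
      using c_pos by (simp add: N.emeasure_eq_measure ennreal_mult[symmetric])
    moreover have "a \<le> measure N (space M - (\<Union>i\<in>{1..<?k}. H i))"
      unfolding a_def using N.finite_measure_mono[OF sub m2] .
    ultimately show ?thesis using c_pos
      by (meson mult_left_mono less_imp_le order_trans)
  qed
  have bound: "real K * (c * a) \<le> b" for K
  proof -
    have "real K * (c * a) = (\<Sum>n<K. c * a)" by simp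
    also have "\<dots> \<le> (\<Sum>n<K. measure N (H (n*r+j)))" by (intro sum_mono key)
    also have "\<dots> = measure N (\<Union>n<K. H (n*r+j))"
    proof (rule measure_finite_Union[symmetric])
      show "(\<lambda>n. H (n*r+j)) ` {..<K} \<subseteq> sets N" using HN j by auto
      show "disjoint_family_on (\<lambda>n. H (n*r+j)) {..<K}"
        unfolding disjoint_family_on_def
      proof (intro ballI impI)
        fix m n assume "m \<in> {..<K}" "n \<in> {..<K}" "m \<noteq> n"
        then have "m*r+j \<noteq> n*r+j" using r by auto
        then show "H (m*r+j) \<inter> H (n*r+j) = {}" using disj j by auto
      qed
    qed (auto simp: N.emeasure_eq_measure)
    also have "\<dots> \<le> b" unfolding b_def using HN j by (intro N.bounded_measure)
    finally show ?thesis .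
  qed
  have a0: "a \<ge> 0" by (simp add: a_def)
  have "a = 0"
  proof (rule ccontr)
    assume "a \<noteq> 0" then have ca: "c * a > 0" using a0 c_pos by simp
    obtain K :: nat where "b / (c*a) < real K" using reals_Archimedean2 by blast
    then have "b < real K * (c * a)" using ca by (simp add: field_simps)
    then show False using bound[of K] by simp
  qed
  then show "emeasure (\<mu> j) (space M - (\<Union>i\<in>{1..}. H i)) = 0"
    using \<open>a = 0\<close> unfolding a_def Minf_def N_def[symmetric] by (simp add: N.emeasure_eq_measure)
qed

end
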